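(* For any simple undirected graph $G$, with $$\Lambda_1=\sum_{\{st,uv\}\in Q}\big(a_{su}(k_t+k_v)+a_{sv}(k_t+k_u)+a_{tu}(k_s+k_v)+a_{tv}(k_s+k_u)\big),\qquad \Lambda_2=\sum_{\{st,uv\}\in Q}(a_{su}+a_{sv}+a_{tu}+a_{tv})(k_s+k_t+k_u+k_v),$$ one has $$\Lambda_2=\Lambda_1+\sum_{st\in E}(k_s+k_t)\big((k_s-1)(k_t-1)-|c(s,t)|\big).$$
   Context: $a_{ij}$ adjacency entries, $k_x$ degree, $\Gamma(x)$ neighbourhood, $c(s,t)=\Gamma(s)\cap\Gamma(t)$. $Q$ is the set of unordered pairs $\{st,uv\}$ of edges with $s,t,u,v$ pairwise distinct. *)

theory Defs
  imports Main
begin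

definition simple_graph :: "'a set \<Rightarrow> ('a \<Rightarrow> 'a \<Rightarrow> bool) \<Rightarrow> bool" where
  "simple_graph V E \<longleftrightarrow> finite V \<and> (\<forall>x y. E x y \<longrightarrow> x \<in> V \<and> y \<in> V)
     \<and> (\<forall>x. \<not> E x x) \<and> (\<forall>x y. E x y \<longrightarrow> E y x)"

definition adj :: "('a \<Rightarrow> 'a \<Rightarrow> bool) \<Rightarrow> 'a \<Rightarrow> 'a \<Rightarrow> int" where
  "adj E x y = (if E x y then 1 else 0)"

definition nbhd :: "('a \<Rightarrow> 'a \<Rightarrow> bool) \<Rightarrow> 'a \<Rightarrow> 'a set" where
  "nbhd E x = {y. E x y}"

definition deg :: "('a \<Rightarrow> 'a \<Rightarrow> bool) \<Rightarrow> 'a \<Rightarrow> int" where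
  "deg E x = int (card (nbhd E x))"

definition common :: "('a \<Rightarrow> 'a \<Rightarrow> bool) \<Rightarrow> 'a \<Rightarrow> 'a \<Rightarrow> 'a set" where
  "common E s t = nbhd E s \<inter> nbhd E t"

definition edges :: "('a \<Rightarrow> 'a \<Rightarrow> bool) \<Rightarrow> 'a set set" where
  "edges E = {{s, t} | s t. E s t}"

definition Qpairs :: "('a \<Rightarrow> 'a \<Rightarrow> bool) \<Rightarrow> 'a set set set" where
  "Qpairs E = {{{s, t}, {u, v}} | s t u v. E s t \<and> E u v \<and> distinct [s, t, u, v]}"

text \<open>Endpoints of an edge (some labelling; summands below are symmetric).\<close>
definition edge_ends :: "('a \<Rightarrow> 'a \<Rightarrow> bool) \<Rightarrow> 'a set \<Rightarrow> 'a \<times> 'a" where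
  "edge_ends E e = (SOME (s, t). E s t \<and> e = {s, t})"

definition Q_labels :: "('a \<Rightarrow> 'a \<Rightarrow> bool) \<Rightarrow> 'a set set \<Rightarrow> 'a \<times> 'a \<times> 'a \<times> 'a" where
  "Q_labels E P = (SOME (s, t, u, v). E s t \<and> E u v \<and> distinct [s, t, u, v]
                      \<and> P = {{s, t}, {u, v}})"

definition Lambda1 :: "('a \<Rightarrow> 'a \<Rightarrow> bool) \<Rightarrow> int" where
  "Lambda1 E = (\<Sum>P\<in>Qpairs E. (case Q_labels E P of (s, t, u, v) \<Rightarrow>
      adj E s u * (deg E t + deg E v) + adj E s v * (deg E t + deg E u)
    + adj E t u * (deg E s + deg E v) + adj E t v * (deg E s + deg E u)))"

definition Lambda2 :: "('a \<Rightarrow> 'a \<Rightarrow> bool) \<Rightarrow> int" where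
  "Lambda2 E = (\<Sum>P\<in>Qpairs E. (case Q_labels E P of (s, t, u, v) \<Rightarrow>
      (adj E s u + adj E s v + adj E t u + adj E t v)
      * (deg E s + deg E t + deg E u + deg E v)))"

end

theory Submission
  imports Defs
begin

definition TT :: "('a \<Rightarrow> 'a \<Rightarrow> bool) \<Rightarrow> ('a \<times> 'a \<times> 'a \<times> 'a) set" where
  "TT E = {(s,t,u,v). E s t \<and> E u v \<and> distinct [s,t,u,v]}"

definition eight :: "'a \<Rightarrow> 'a \<Rightarrow> 'a \<Rightarrow> 'a \<Rightarrow> ('a \<times> 'a \<times> 'a \<times> 'a) set" where
  "eight s t u v = {(s,t,u,v),(t,s,u,v),(s,t,v,u),(t,s,v,u),(u,v,s,t),(v,u,s,t),(u,v,t,s),(v,u,t,s)}"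

lemma eight_card: "distinct [s,t,u,v] \<Longrightarrow> card (eight s t u v) = 8"
  by (simp add: eight_def)

lemma q_eq: "distinct [a,b,c,d] \<Longrightarrow> distinct [s,t,u,v] \<Longrightarrow>
   {{s,t},{u,v}} = {{a,b},{c,d}} \<Longrightarrow> (s,t,u,v) \<in> eight a b c d"
  by (auto simp: eight_def doubleton_eq_iff)

definition q4 :: "'a \<times> 'a \<times> 'a \<times> 'a \<Rightarrow> 'a set set" where
  "q4 x = (case x of (s,t,u,v) \<Rightarrow> {{s,t},{u,v}})"
lemma QP: "Qpairs E = q4 ` TT E"
  proof
    show "Qpairs E \<subseteq> q4 ` TT E"
    proof
      fix P assume "P \<in> Qpairs E"
      then obtain s t u v where st: "E s t" "E u v" "distinct [s,t,u,v]" and P: "P = {{s,t},{u,v}}"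
        unfolding Qpairs_def by blast
      have "(s,t,u,v) \<in> TT E" using st unfolding TT_def by simp
      moreover have "P = q4 (s,t,u,v)" unfolding q4_def P by simp
      ultimately show "P \<in> q4 ` TT E" by (rule rev_image_eqI)
    qed
    show "q4 ` TT E \<subseteq> Qpairs E"
    proof
      fix P assume "P \<in> q4 ` TT E"
      then obtain x where x: "x \<in> TT E" "P = q4 x" by (rule imageE) 
      obtain s t u v where xe: "x = (s,t,u,v)" by (cases x) auto
      have st: "E s t" "E u v" "distinct [s,t,u,v]" using x(1) unfolding xe TT_def by simp_all
      have P: "P = {{s,t},{u,v}}" using x(2) unfolding xe q4_def by simp
      show "P \<in> Qpairs E" unfolding Qpairs_def using st P by blast
    qed
  qed

lemma eight_mem:
  assumes "x \<in> eight a b c d" "E a b" "E c d" "distinct [a,b,c,d]" "\<And>x y. E x y \<Longrightarrow> E y x"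
  shows "x \<in> TT E \<and> (case x of (s,t,u,v) \<Rightarrow> {{s,t},{u,v}}) = {{a,b},{c,d}}"
  using assms unfolding eight_def TT_def by (auto simp: insert_commute)
lemma eight_f:
  fixes f :: "'a \<Rightarrow> 'a \<Rightarrow> 'a \<Rightarrow> 'a \<Rightarrow> int"
  assumes "x \<in> eight a b c d" 
    and sym1: "\<And>s t u v. f s t u v = f t s u v"
    and sym2: "\<And>s t u v. f s t u v = f s t v u"
    and sym3: "\<And>s t u v. f s t u v = f u v s t"
  shows "(case x of (s,t,u,v) \<Rightarrow> f s t u v) = f a b c d"
  using assms(1) unfolding eight_def 
  by (simp only: insert_iff empty_iff) (elim disjE FalseE; simp; metis sym1 sym2 sym3)

lemma Q_labels_spec:
  assumes "E s t" "E u v" "distinct [s,t,u,v]"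
  shows "case Q_labels E {{s,t},{u,v}} of (a,b,c,d) \<Rightarrow>
     E a b \<and> E c d \<and> distinct [a,b,c,d] \<and> {{s,t},{u,v}} = {{a,b},{c,d}}"
  unfolding Q_labels_def
  by (rule someI[of _ "(s,t,u,v)"]) (use assms in auto)

lemma edge_ends_spec0:
  assumes "E s t"
  shows "case edge_ends E {s,t} of (a,b) \<Rightarrow> E a b \<and> {s,t} = {a,b}"
  unfolding edge_ends_def
  by (rule someI[of _ "(s,t)"]) (use assms in auto)

lemma edge_ends_spec:
  assumes "E s t" "edge_ends E {s,t} = (a,b)"
  shows "E a b \<and> {s,t} = {a,b}"
  using edge_ends_spec0[of E s t] assms by simp

lemma TT_finite: "simple_graph V E \<Longrightarrow> finite (TT E)"
proof -
  assume sg: "simple_graph V E"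
  have "TT E \<subseteq> V \<times> V \<times> V \<times> V" using sg unfolding TT_def simple_graph_def by auto
  moreover have "finite (V \<times> V \<times> V \<times> V)" using sg unfolding simple_graph_def by auto
  ultimately show ?thesis by (rule finite_subset)
qed

lemma sumQ:
  fixes f :: "'a \<Rightarrow> 'a \<Rightarrow> 'a \<Rightarrow> 'a \<Rightarrow> int"
  assumes sg: "simple_graph V E"
    and sym1: "\<And>s t u v. f s t u v = f t s u v"
    and sym2: "\<And>s t u v. f s t u v = f s t v u"
    and sym3: "\<And>s t u v. f s t u v = f u v s t"
  shows "8 * (\<Sum>P\<in>Qpairs E. (case Q_labels E P of (s,t,u,v) \<Rightarrow> f s t u v))
       = (\<Sum>x\<in>TT E. case x of (s,t,u,v) \<Rightarrow> f s t u v)"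
proof -
  have Esym: "\<And>x y. E x y \<Longrightarrow> E y x" using sg unfolding simple_graph_def by auto
  have QP: "Qpairs E = q4 ` TT E" by (rule QP)
  have fin: "finite (TT E)" using TT_finite[OF sg] .
  have "(\<Sum>x\<in>TT E. case x of (s,t,u,v) \<Rightarrow> f s t u v)
      = (\<Sum>P\<in>q4 ` TT E. \<Sum>x\<in>{x\<in>TT E. q4 x = P}. case x of (s,t,u,v) \<Rightarrow> f s t u v)"
    by (rule sum.image_gen[OF fin])
  also have "\<dots> = (\<Sum>P\<in>q4 ` TT E. 8 * (case Q_labels E P of (s,t,u,v) \<Rightarrow> f s t u v))"
  proof (rule sum.cong[OF refl])
    fix P assume "P \<in> q4 ` TT E"
    then obtain x where x: "x \<in> TT E" "P = q4 x" by (rule imageE)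
    obtain s t u v where xe: "x = (s,t,u,v)" by (cases x) auto
    have st: "E s t" "E u v" "distinct [s,t,u,v]" using x(1) unfolding xe TT_def by simp_all
    have P: "P = {{s,t},{u,v}}" using x(2) unfolding xe q4_def by simp
    obtain a b c d where lab: "Q_labels E P = (a,b,c,d)" by (cases "Q_labels E P") auto
    have L0: "case Q_labels E P of (a,b,c,d) \<Rightarrow>
     E a b \<and> E c d \<and> distinct [a,b,c,d] \<and> P = {{a,b},{c,d}}"
      using Q_labels_spec[of E s t u v, OF st] unfolding P[symmetric] .
    have L1: "E a b \<and> E c d \<and> distinct [a,b,c,d] \<and> P = {{a,b},{c,d}}"
      using L0 unfolding lab by (simp only: prod.case)
    have L: "E a b" "E c d" "distinct [a,b,c,d]" "P = {{a,b},{c,d}}"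
      using L1 by blast+
    have fib: "{x\<in>TT E. q4 x = P} = eight a b c d"
    proof
      show "{x\<in>TT E. q4 x = P} \<subseteq> eight a b c d"
      proof
        fix x assume x: "x \<in> {x\<in>TT E. q4 x = P}"
        obtain s' t' u' v' where xe: "x = (s',t',u',v')" by (cases x) auto
        have x1: "x \<in> TT E" using x by (simp only: mem_Collect_eq)
        have x2: "q4 x = P" using x by (simp only: mem_Collect_eq)
        have d: "distinct [s',t',u',v']" using x1 unfolding xe TT_def by simp
        have "{{s',t'},{u',v'}} = P" using x2 unfolding xe q4_def by (simp only: prod.case)
        hence e: "{{s',t'},{u',v'}} = {{a,b},{c,d}}" using L(4) by (rule trans)
        have "(s',t',u',v') \<in> eight a b c d" by (rule q_eq[OF L(3) d e])
        then show "x \<in> eight a b c d" unfolding xe .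
      qed
      show "eight a b c d \<subseteq> {x\<in>TT E. q4 x = P}"
      proof
        fix x assume "x \<in> eight a b c d"
        from eight_mem[OF this L(1,2,3) Esym] have "x \<in> TT E \<and> q4 x = P"
          unfolding q4_def L(4) .
        then show "x \<in> {x\<in>TT E. q4 x = P}" by (rule CollectI)
      qed
    qed
    have fc: "\<And>x. x \<in> eight a b c d \<Longrightarrow> (case x of (s,t,u,v) \<Rightarrow> f s t u v) = f a b c d"
      by (rule eight_f[OF _ sym1 sym2 sym3])
    have "(\<Sum>x\<in>{x\<in>TT E. q4 x = P}. case x of (s,t,u,v) \<Rightarrow> f s t u v)
        = (\<Sum>x\<in>eight a b c d. f a b c d)"
      unfolding fib by (rule sum.cong[OF refl fc])
    also have "\<dots> = 8 * f a b c d" using eight_card[OF L(3)] by simp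
    finally show "(\<Sum>x\<in>{x\<in>TT E. q4 x = P}. case x of (s,t,u,v) \<Rightarrow> f s t u v)
        = 8 * (case Q_labels E P of (s,t,u,v) \<Rightarrow> f s t u v)" using lab by simp
  qed
  finally show ?thesis unfolding QP by (simp add: sum_distrib_left)
qed

lemma sumE:
  fixes h :: "'a \<Rightarrow> 'a \<Rightarrow> int"
  assumes sg: "simple_graph V E"
    and sym: "\<And>s t. h s t = h t s"
  shows "2 * (\<Sum>e\<in>edges E. (case edge_ends E e of (s,t) \<Rightarrow> h s t))
       = (\<Sum>x\<in>{(s,t). E s t}. case x of (s,t) \<Rightarrow> h s t)"
proof -
  have Esym: "\<And>x y. E x y \<Longrightarrow> E y x" and irr: "\<And>x. \<not> E x x"
    using sg unfolding simple_graph_def by auto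
  let ?q = "\<lambda>(s::'a,t::'a). {s,t}"
  have QP: "edges E = ?q ` {(s,t). E s t}" unfolding edges_def by force
  have fin: "finite {(s,t). E s t}"
  proof -
    have "{(s,t). E s t} \<subseteq> V \<times> V" using sg unfolding simple_graph_def by auto
    moreover have "finite (V \<times> V)" using sg unfolding simple_graph_def by auto
    ultimately show ?thesis by (rule finite_subset)
  qed
  have "(\<Sum>x\<in>{(s,t). E s t}. case x of (s,t) \<Rightarrow> h s t)
      = (\<Sum>P\<in>?q ` {(s,t). E s t}. \<Sum>x\<in>{x\<in>{(s,t). E s t}. ?q x = P}. case x of (s,t) \<Rightarrow> h s t)"
    by (rule sum.image_gen[OF fin])
  also have "\<dots> = (\<Sum>P\<in>?q ` {(s,t). E s t}. 2 * (case edge_ends E P of (s,t) \<Rightarrow> h s t))"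
  proof (rule sum.cong[OF refl])
    fix P assume "P \<in> ?q ` {(s,t). E s t}"
    then obtain s t where st: "E s t" and P: "P = {s,t}" by auto
    obtain a b where lab: "edge_ends E P = (a,b)" by (cases "edge_ends E P") auto
    have L: "E a b" "P = {a,b}"
      using edge_ends_spec[of E s t a b] st lab unfolding P by blast+
    have ab: "a \<noteq> b" using L irr by auto
    have fib: "{x\<in>{(s,t). E s t}. ?q x = P} = {(a,b),(b,a)}"
      using L Esym by (auto simp: doubleton_eq_iff)
    have "(\<Sum>x\<in>{x\<in>{(s,t). E s t}. ?q x = P}. case x of (s,t) \<Rightarrow> h s t) = 2 * h a b"
      unfolding fib using ab sym by simp
    then show "(\<Sum>x\<in>{x\<in>{(s,t). E s t}. ?q x = P}. case x of (s,t) \<Rightarrow> h s t)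
        = 2 * (case edge_ends E P of (s,t) \<Rightarrow> h s t)" using lab by simp
  qed
  finally show ?thesis unfolding QP by (simp add: sum_distrib_left)
qed


definition FF :: "('a \<Rightarrow> 'a \<Rightarrow> bool) \<Rightarrow> 'a \<times> 'a \<Rightarrow> ('a \<times> 'a) set" where
  "FF E p = {(t,v). E (fst p) t \<and> E (snd p) v \<and> distinct [fst p, t, snd p, v]}"

lemma adj_sym: "simple_graph V E \<Longrightarrow> adj E x y = adj E y x"
  unfolding simple_graph_def adj_def by auto

lemma nbhd_finite: "simple_graph V E \<Longrightarrow> finite (nbhd E x)"
proof -
  assume sg: "simple_graph V E"
  have "nbhd E x \<subseteq> V" using sg unfolding simple_graph_def nbhd_def by auto
  moreover have "finite V" using sg unfolding simple_graph_def by auto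
  ultimately show ?thesis by (rule finite_subset)
qed

lemma FF_finite: "simple_graph V E \<Longrightarrow> finite (FF E p)"
proof -
  assume sg: "simple_graph V E"
  have "FF E p \<subseteq> V \<times> V" using sg unfolding simple_graph_def FF_def by auto
  moreover have "finite (V \<times> V)" using sg unfolding simple_graph_def by auto
  ultimately show ?thesis by (rule finite_subset)
qed

lemma Eo_finite: "simple_graph V E \<Longrightarrow> finite {(s,t). E s t}"
proof -
  assume sg: "simple_graph V E"
  have "{(s,t). E s t} \<subseteq> V \<times> V" using sg unfolding simple_graph_def by auto
  moreover have "finite (V \<times> V)" using sg unfolding simple_graph_def by auto
  ultimately show ?thesis by (rule finite_subset)
qed

lemma card_FF:
  assumes sg: "simple_graph V E" and su: "E s u"
  shows "int (card (FF E (s,u))) = (deg E s - 1) * (deg E u - 1) - int (card (common E s u))"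
proof -
  have Esym: "\<And>x y. E x y \<Longrightarrow> E y x" and irr: "\<And>x. \<not> E x x"
    using sg unfolding simple_graph_def by auto
  let ?A = "(nbhd E s - {u}) \<times> (nbhd E u - {s})"
  let ?B = "(\<lambda>t. (t,t)) ` common E s u"
  have eq: "FF E (s,u) = ?A - ?B"
    using irr su unfolding FF_def nbhd_def common_def by auto
  have sub: "?B \<subseteq> ?A"
    using irr su unfolding nbhd_def common_def by auto
  have fN: "finite (nbhd E s)" "finite (nbhd E u)" using nbhd_finite[OF sg] by auto
  have fA: "finite ?A" using fN by simp
  have cB: "card ?B = card (common E s u)" by (rule card_image) (auto simp: inj_on_def)
  have cBA: "card ?B \<le> card ?A" using card_mono[OF fA sub] .
  have us: "u \<in> nbhd E s" "s \<in> nbhd E u" using su Esym unfolding nbhd_def by auto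
  have c1: "card (nbhd E s - {u}) = card (nbhd E s) - 1" using us(1) fN(1) by simp
  have c2: "card (nbhd E u - {s}) = card (nbhd E u) - 1" using us(2) fN(2) by simp
  have p1: "card (nbhd E s) \<ge> 1" "card (nbhd E u) \<ge> 1"
    using us fN by (auto simp: Suc_le_eq card_gt_0_iff)
  have "card (FF E (s,u)) = card ?A - card ?B" unfolding eq by (rule card_Diff_subset[OF _ sub]) (use fA in \<open>rule finite_subset[OF sub]\<close>)
  hence "int (card (FF E (s,u))) = int (card ?A) - int (card ?B)" using cBA by simp
  also have "int (card ?A) = (deg E s - 1) * (deg E u - 1)"
    unfolding card_cartesian_product c1 c2 deg_def using p1 by (simp add: of_nat_diff)
  finally show ?thesis using cB by simp
qed

theorem proposition15:
  fixes V :: "'a set" and E :: "'a \<Rightarrow> 'a \<Rightarrow> bool"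
  assumes "simple_graph V E"
  shows "Lambda2 E = Lambda1 E +
    (\<Sum>e\<in>edges E. (case edge_ends E e of (s, t) \<Rightarrow>
        (deg E s + deg E t) * ((deg E s - 1) * (deg E t - 1) - int (card (common E s t)))))"
proof -
  note sg = assms
  define a where "a = adj E"
  define k where "k = deg E"
  define g where "g = (\<lambda>s t u v. (a s u + a s v + a t u + a t v) * (k s + k t + k u + k v)
     - (a s u * (k t + k v) + a s v * (k t + k u) + a t u * (k s + k v) + a t v * (k s + k u)))"
  define \<phi> where "\<phi> = (\<lambda>x y. a x y * (k x + k y))"
  define h where "h = (\<lambda>s t. (deg E s + deg E t) * ((deg E s - 1) * (deg E t - 1) - int (card (common E s t))))"
  have Esym: "\<And>x y. E x y \<Longrightarrow> E y x" using sg unfolding simple_graph_def by auto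
  have asym: "\<And>x y. a x y = a y x" unfolding a_def using adj_sym[OF sg] by blast
  have S1: "Lambda2 E - Lambda1 E = (\<Sum>P\<in>Qpairs E. case Q_labels E P of (s,t,u,v) \<Rightarrow> g s t u v)"
    unfolding Lambda2_def Lambda1_def sum_subtractf[symmetric]
    by (rule sum.cong[OF refl]) (auto simp: g_def a_def k_def split: prod.split)
  have S2: "8 * (\<Sum>P\<in>Qpairs E. case Q_labels E P of (s,t,u,v) \<Rightarrow> g s t u v)
      = (\<Sum>x\<in>TT E. case x of (s,t,u,v) \<Rightarrow> g s t u v)"
    by (rule sumQ[OF sg]) (simp_all add: g_def algebra_simps asym)
  have S3: "(\<Sum>x\<in>TT E. case x of (s,t,u,v) \<Rightarrow> g s t u v)
     = (\<Sum>x\<in>TT E. case x of (s,t,u,v) \<Rightarrow> \<phi> s u)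
     + (\<Sum>x\<in>TT E. case x of (s,t,u,v) \<Rightarrow> \<phi> s v)
     + (\<Sum>x\<in>TT E. case x of (s,t,u,v) \<Rightarrow> \<phi> t u)
     + (\<Sum>x\<in>TT E. case x of (s,t,u,v) \<Rightarrow> \<phi> t v)"
    unfolding sum.distrib[symmetric]
    by (rule sum.cong[OF refl]) (auto simp: g_def \<phi>_def algebra_simps split: prod.split)
  have r1: "(\<Sum>x\<in>TT E. case x of (s,t,u,v) \<Rightarrow> \<phi> s v) = (\<Sum>x\<in>TT E. case x of (s,t,u,v) \<Rightarrow> \<phi> s u)"
    by (rule sum.reindex_bij_witness[of _ "\<lambda>(s,t,u,v). (s,t,v,u)" "\<lambda>(s,t,u,v). (s,t,v,u)"])
       (auto simp: TT_def Esym)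
  have r2: "(\<Sum>x\<in>TT E. case x of (s,t,u,v) \<Rightarrow> \<phi> t u) = (\<Sum>x\<in>TT E. case x of (s,t,u,v) \<Rightarrow> \<phi> s u)"
    by (rule sum.reindex_bij_witness[of _ "\<lambda>(s,t,u,v). (t,s,u,v)" "\<lambda>(s,t,u,v). (t,s,u,v)"])
       (auto simp: TT_def Esym)
  have r3: "(\<Sum>x\<in>TT E. case x of (s,t,u,v) \<Rightarrow> \<phi> t v) = (\<Sum>x\<in>TT E. case x of (s,t,u,v) \<Rightarrow> \<phi> s u)"
    by (rule sum.reindex_bij_witness[of _ "\<lambda>(s,t,u,v). (t,s,v,u)" "\<lambda>(s,t,u,v). (t,s,v,u)"])
       (auto simp: TT_def Esym)
  let ?Eo = "{(s,t). E s t}"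
  let ?P = "\<lambda>x. case x of (s,t,u,v) \<Rightarrow> E s u"
  have S4: "(\<Sum>x\<in>TT E. case x of (s,t,u,v) \<Rightarrow> \<phi> s u)
      = (\<Sum>x\<in>TT E. if ?P x then (case x of (s,t,u,v) \<Rightarrow> \<phi> s u) else 0)"
    by (rule sum.cong[OF refl]) (auto simp: \<phi>_def a_def adj_def split: prod.split)
  also have "\<dots> = (\<Sum>x\<in>{x\<in>TT E. ?P x}. case x of (s,t,u,v) \<Rightarrow> \<phi> s u)"
    by (rule sum.inter_filter[symmetric, OF TT_finite[OF sg]])
  also have "\<dots> = (\<Sum>(p,q)\<in>Sigma ?Eo (FF E). \<phi> (fst p) (snd p))"
    by (rule sum.reindex_bij_witness[of _ "\<lambda>((s,u),(t,v)). (s,t,u,v)" "\<lambda>(s,t,u,v). ((s,u),(t,v))"])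
       (auto simp: TT_def FF_def)
  also have "\<dots> = (\<Sum>p\<in>?Eo. \<Sum>q\<in>FF E p. \<phi> (fst p) (snd p))"
    by (rule sum.Sigma[symmetric]) (use Eo_finite[OF sg] FF_finite[OF sg] in auto)
  also have "\<dots> = (\<Sum>p\<in>?Eo. case p of (s,t) \<Rightarrow> h s t)"
  proof (rule sum.cong[OF refl])
    fix p assume "p \<in> ?Eo"
    then obtain s t where p: "p = (s,t)" and st: "E s t" by auto
    have "(\<Sum>q\<in>FF E p. \<phi> (fst p) (snd p)) = int (card (FF E (s,t))) * \<phi> s t"
      unfolding p by simp
    also have "\<dots> = h s t" unfolding card_FF[OF sg st] h_def \<phi>_def a_def k_def adj_def
      using st by (simp add: algebra_simps)
    finally show "(\<Sum>q\<in>FF E p. \<phi> (fst p) (snd p)) = (case p of (s,t) \<Rightarrow> h s t)" unfolding p by simp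
  qed
  finally have S5: "(\<Sum>x\<in>TT E. case x of (s,t,u,v) \<Rightarrow> \<phi> s u) = (\<Sum>p\<in>?Eo. case p of (s,t) \<Rightarrow> h s t)" .
  have S6: "2 * (\<Sum>e\<in>edges E. (case edge_ends E e of (s,t) \<Rightarrow> h s t)) = (\<Sum>p\<in>?Eo. case p of (s,t) \<Rightarrow> h s t)"
    by (rule sumE[OF sg]) (simp add: h_def common_def Int_commute algebra_simps)
  have "8 * (Lambda2 E - Lambda1 E) = 8 * (\<Sum>e\<in>edges E. (case edge_ends E e of (s,t) \<Rightarrow> h s t))"
    using S1 S2 S3 r1 r2 r3 S5 S6 by simp
  hence "Lambda2 E - Lambda1 E = (\<Sum>e\<in>edges E. (case edge_ends E e of (s,t) \<Rightarrow> h s t))" by simp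
  thus ?thesis unfolding h_def by simp
qed

end
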